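(* Let $2\le k\le n$ and let $w$ be a word of length $k$. Then \[f(w,n,1)\cdot(3n-4k)\;\le\; f(w,n,2)\;\le\; f(w,n,1)\cdot 2n+4\sum_{i=k}^{n} f(w,i,1).\]
   Context: Let $[n]=\{1,\dots,n\}$. For a positive integer $d$, an $(n,d)$-grid is a function $G:[n]^d\to\Sigma$ for an arbitrary set of letters $\Sigma$. A line of length $k$ in $[n]^d$ is a set $\{p,p+v,\dots,p+(k-1)v\}\subseteq[n]^d$ with $p\in[n]^d$ and $v\in\{-1,0,1\}^d\setminus\{\vec 0\}$ (each such set counted once). For a word $w=w_1\cdots w_k$, such a line contains $w$ in $G$ if $G(p)G(p+v)\cdots G(p+(k-1)v)=w$ or this sequence read backwards equals $w$. $f(w,G)$ is the number of lines of length $k$ in $[n]^d$ containing $w$, and $f(w,n,d)=\max_G f(w,G)$ over all $(n,d)$-grids $G$. In particular $f(w,i,1)$ is the maximum number of sets of $k$ consecutive positions in a sequence of length $i$ that read $w$ forwards or backwards. *)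

theory Defs
  imports Main
begin

definition grid_pts :: "nat \<Rightarrow> nat \<Rightarrow> int list set" where
  "grid_pts n d = {p. length p = d \<and> (\<forall>x\<in>set p. 1 \<le> x \<and> x \<le> int n)}"

definition dirs :: "nat \<Rightarrow> int list set" where
  "dirs d = {v. length v = d \<and> set v \<subseteq> {-1,0,1} \<and> (\<exists>x\<in>set v. x \<noteq> 0)}"

definition line_pt :: "int list \<Rightarrow> int list \<Rightarrow> nat \<Rightarrow> int list" where
  "line_pt p v i = map2 (\<lambda>a b. a + int i * b) p v"

definition line_seq :: "int list \<Rightarrow> int list \<Rightarrow> nat \<Rightarrow> int list list" where
  "line_seq p v k = map (line_pt p v) [0..<k]"

text \<open>Lines of length |w| in [n]^d (as sets, each counted once) that contain w in G,
  i.e. read w forwards or backwards.\<close>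
definition lines_containing ::
  "'a list \<Rightarrow> (int list \<Rightarrow> 'a) \<Rightarrow> nat \<Rightarrow> nat \<Rightarrow> int list set set" where
  "lines_containing w G n d =
     {L. \<exists>p v. p \<in> grid_pts n d \<and> v \<in> dirs d \<and>
              set (line_seq p v (length w)) \<subseteq> grid_pts n d \<and>
              L = set (line_seq p v (length w)) \<and>
              (map G (line_seq p v (length w)) = w \<or>
               rev (map G (line_seq p v (length w))) = w)}"

definition fG :: "'a list \<Rightarrow> (int list \<Rightarrow> 'a) \<Rightarrow> nat \<Rightarrow> nat \<Rightarrow> nat" where
  "fG w G n d = card (lines_containing w G n d)"

text \<open>f(w,n,d): maximum over all (n,d)-grids (values of G outside [n]^d are irrelevant).\<close>
definition fmax :: "'a list \<Rightarrow> nat \<Rightarrow> nat \<Rightarrow> nat" where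
  "fmax w n d = Max {fG w G n d | G. True}"

end

theory Submission
  imports Defs
begin

definition okw :: "'a list \<Rightarrow> 'a list \<Rightarrow> bool" where
  "okw w xs \<longleftrightarrow> xs = w \<or> rev xs = w"
definition seg :: "int \<Rightarrow> int \<Rightarrow> int \<Rightarrow> int \<Rightarrow> nat \<Rightarrow> int list list" where
  "seg a b c d k = map (\<lambda>i. [a + int i * c, b + int i * d]) [0..<k]"
definition seg1 :: "int \<Rightarrow> nat \<Rightarrow> int list list" where
  "seg1 a k = map (\<lambda>i. [a + int i]) [0..<k]"
definition occ1 :: "'a list \<Rightarrow> (int list \<Rightarrow> 'a) \<Rightarrow> nat \<Rightarrow> int set" where
  "occ1 w H n = {a. set (seg1 a (length w)) \<subseteq> grid_pts n 1 \<and> okw w (map H (seg1 a (length w)))}"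
definition Q :: "'a list \<Rightarrow> (int list \<Rightarrow> 'a) \<Rightarrow> nat \<Rightarrow> int \<Rightarrow> int \<Rightarrow> (int \<times> int) set" where
  "Q w G n c d = {(a,b). set (seg a b c d (length w)) \<subseteq> grid_pts n 2 \<and> okw w (map G (seg a b c d (length w)))}"

lemma okw_rev: "okw w (rev xs) = okw w xs"
  unfolding okw_def by auto

lemma line_seq2: "line_seq [a,b] [c,d] k = seg a b c d k"
  unfolding line_seq_def line_pt_def seg_def by simp

lemma line_seq1: "line_seq [a] [c] k = map (\<lambda>i. [a + int i * c]) [0..<k]"
  unfolding line_seq_def line_pt_def by simp

lemma grid2: "[x,y] \<in> grid_pts n 2 \<longleftrightarrow> 1 \<le> x \<and> x \<le> int n \<and> 1 \<le> y \<and> y \<le> int n"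
  unfolding grid_pts_def by auto

lemma grid1: "[x] \<in> grid_pts n 1 \<longleftrightarrow> 1 \<le> x \<and> x \<le> int n"
  unfolding grid_pts_def by auto

lemma len2: "length xs = 2 \<Longrightarrow> \<exists>x y. xs = [x,y]"
  by (cases xs; cases "tl xs") auto

lemma len1: "length xs = 1 \<Longrightarrow> \<exists>x. xs = [x]"
  by (cases xs) auto

lemma grid2E: "p \<in> grid_pts n 2 \<Longrightarrow> \<exists>x y. p = [x,y]"
  unfolding grid_pts_def using len2 by auto

lemma grid1E: "p \<in> grid_pts n 1 \<Longrightarrow> \<exists>x. p = [x]"
  unfolding grid_pts_def using len1 by auto

lemma dirs2E: "v \<in> dirs 2 \<Longrightarrow> \<exists>c d. v = [c,d] \<and> c \<in> {-1,0,1} \<and> d \<in> {-1,0,1} \<and> (c \<noteq> 0 \<or> d \<noteq> 0)"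
  unfolding dirs_def using len2 by fastforce

lemma dirs2I: "c \<in> {-1,0,1} \<Longrightarrow> d \<in> {-1,0,1} \<Longrightarrow> c \<noteq> 0 \<or> d \<noteq> 0 \<Longrightarrow> [c,d] \<in> dirs 2"
  unfolding dirs_def by auto

lemma dirs1: "v \<in> dirs 1 \<longleftrightarrow> v = [1] \<or> v = [-1]"
  unfolding dirs_def using len1 by fastforce

lemma set_seg: "set (seg a b c d k) = {[a + int i * c, b + int i * d] | i. i < k}"
  unfolding seg_def by auto

lemma set_seg1: "set (seg1 a k) = {[a + int i] | i. i < k}"
  unfolding seg1_def by auto

lemma seg_grid: "set (seg a b c d k) \<subseteq> grid_pts n 2 \<longleftrightarrow>
   (\<forall>i<k. 1 \<le> a + int i * c \<and> a + int i * c \<le> int n \<and> 1 \<le> b + int i * d \<and> b + int i * d \<le> int n)"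
  unfolding set_seg grid2[symmetric] by auto

lemma seg1_grid: "set (seg1 a k) \<subseteq> grid_pts n 1 \<longleftrightarrow>
   (\<forall>i<k. 1 \<le> a + int i \<and> a + int i \<le> int n)"
  unfolding set_seg1 grid1[symmetric] by auto

lemma seg1_grid': "k \<ge> 1 \<Longrightarrow> set (seg1 a k) \<subseteq> grid_pts n 1 \<longleftrightarrow> 1 \<le> a \<and> a + int k - 1 \<le> int n"
  unfolding seg1_grid
proof safe
  assume "1 \<le> k" "\<forall>i<k. 1 \<le> a + int i \<and> a + int i \<le> int n"
  moreover have "k - 1 < k" using \<open>1 \<le> k\<close> by simp
  ultimately have h0: "1 \<le> a + int 0" and h1: "a + int (k-1) \<le> int n" by blast+
  then show "1 \<le> a" "a + int k - 1 \<le> int n"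
    using \<open>1 \<le> k\<close> by (auto simp: of_nat_diff)
qed auto

lemma seg_rev: "seg a b c d k = rev (seg (a + int (k-1) * c) (b + int (k-1) * d) (-c) (-d) k)"
  unfolding seg_def
  by (rule nth_equalityI) (auto simp: rev_nth of_nat_diff algebra_simps)

lemma seg1_rev: "map (\<lambda>i. [a + int i * (-1)]) [0..<k] = rev (seg1 (a - int (k-1)) k)"
  unfolding seg1_def
  by (rule nth_equalityI) (auto simp: rev_nth of_nat_diff algebra_simps)

lemma seg_hd: "k \<ge> 1 \<Longrightarrow> [a,b] \<in> set (seg a b c d k)"
  unfolding set_seg by force

lemma seg1_hd: "k \<ge> 1 \<Longrightarrow> [a] \<in> set (seg1 a k)"
  unfolding set_seg1 by force

lemma seg1_inj:
  assumes "k \<ge> 1" "set (seg1 a k) = set (seg1 a' k)" shows "a = a'"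
proof -
  have "[a] \<in> set (seg1 a' k)" using assms seg1_hd by metis
  then obtain i where "a = a' + int i" unfolding set_seg1 by auto
  moreover have "[a'] \<in> set (seg1 a k)" using assms seg1_hd by metis
  then obtain j where "a' = a + int j" unfolding set_seg1 by auto
  ultimately show ?thesis by simp
qed

lemma LC1:
  assumes k: "length w \<ge> 1"
  shows "lines_containing w H n 1 = (\<lambda>a. set (seg1 a (length w))) ` occ1 w H n"
proof
  show "lines_containing w H n 1 \<subseteq> (\<lambda>a. set (seg1 a (length w))) ` occ1 w H n"
  proof
    fix L assume "L \<in> lines_containing w H n 1"
    then obtain p v where p: "p \<in> grid_pts n 1" and v: "v \<in> dirs 1"
      and sub: "set (line_seq p v (length w)) \<subseteq> grid_pts n 1"
      and L: "L = set (line_seq p v (length w))"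
      and ok: "okw w (map H (line_seq p v (length w)))"
      unfolding lines_containing_def okw_def by blast
    obtain x where px: "p = [x]" using grid1E p by blast
    from v have "v = [1] \<or> v = [-1]" using dirs1 by blast
    then show "L \<in> (\<lambda>a. set (seg1 a (length w))) ` occ1 w H n"
    proof
      assume "v = [1]"
      then have e: "line_seq p v (length w) = seg1 x (length w)"
        by (simp add: px line_seq1 seg1_def)
      show ?thesis using sub L ok unfolding e occ1_def by blast
    next
      assume "v = [-1]"
      then have e: "line_seq p v (length w) = rev (seg1 (x - int (length w - 1)) (length w))"
        using seg1_rev[of x "length w"] by (simp add: px line_seq1)
      show ?thesis using sub L ok unfolding e occ1_def by (auto simp: okw_rev rev_map[symmetric])
    qed
  qed
next
  show "(\<lambda>a. set (seg1 a (length w))) ` occ1 w H n \<subseteq> lines_containing w H n 1"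
  proof
    fix L assume "L \<in> (\<lambda>a. set (seg1 a (length w))) ` occ1 w H n"
    then obtain a where a: "a \<in> occ1 w H n" and L: "L = set (seg1 a (length w))" by blast
    have e: "line_seq [a] [1] (length w) = seg1 a (length w)"
      unfolding line_seq1 seg1_def by simp
    have g1: "[a] \<in> grid_pts n 1" using a seg1_hd[OF k] unfolding occ1_def by blast
    have d1: "[1] \<in> dirs 1" using dirs1 by simp
    show "L \<in> lines_containing w H n 1"
      unfolding lines_containing_def
      apply (rule CollectI, rule exI[of _ "[a]"], rule exI[of _ "[1]"])
      using a L g1 d1 unfolding occ1_def okw_def by (simp add: e)
  qed
qed

lemma fG1:
  assumes k: "length w \<ge> 1" shows "fG w H n 1 = card (occ1 w H n)"
proof -
  have "inj_on (\<lambda>a. set (seg1 a (length w))) (occ1 w H n)"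
  proof (rule inj_onI)
    fix x y assume "set (seg1 x (length w)) = set (seg1 y (length w))"
    then show "x = y" by (rule seg1_inj[OF k])
  qed
  then show ?thesis unfolding fG_def LC1[OF k] by (rule card_image)
qed

lemma occ1_finite: "length w \<ge> 1 \<Longrightarrow> finite (occ1 w H n)"
proof -
  assume k: "length w \<ge> 1"
  have "occ1 w H n \<subseteq> {1..int n}"
  proof
    fix a assume "a \<in> occ1 w H n"
    then have "[a] \<in> grid_pts n 1" using seg1_hd[OF k, of a] unfolding occ1_def by blast
    then show "a \<in> {1..int n}" using grid1[of a n] by auto
  qed
  then show ?thesis using finite_subset by blast
qed

lemma grid_finite: "finite (grid_pts n d)"
proof -
  have "grid_pts n d \<subseteq> {xs. set xs \<subseteq> {1..int n} \<and> length xs = d}"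
    unfolding grid_pts_def by auto
  then show ?thesis using finite_lists_length_eq[of "{1..int n}" d] finite_subset by blast
qed

lemma LC_sub: "lines_containing w G n d \<subseteq> Pow (grid_pts n d)"
  unfolding lines_containing_def by auto

lemma LC_finite: "finite (lines_containing w G n d)"
  using LC_sub grid_finite finite_subset by (metis finite_Pow_iff)

lemma fvals_finite: "finite {fG w G n d | G. True}"
proof -
  have "{fG w G n d | G. True} \<subseteq> {..card (Pow (grid_pts n d))}"
  proof -
    have "\<And>G. fG w G n d \<le> card (Pow (grid_pts n d))" unfolding fG_def
      by (rule card_mono) (simp_all add: grid_finite LC_sub)
    then show ?thesis by auto
  qed
  then show ?thesis using finite_subset by blast
qed

lemma fG_le_fmax: "fG w G n d \<le> fmax w n d"
  unfolding fmax_def by (rule Max_ge[OF fvals_finite]) blast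

lemma fmax_attained: "\<exists>G. fmax w n d = fG w G n d"
proof -
  have "fmax w n d \<in> {fG w G n d | G. True}"
    unfolding fmax_def by (rule Max_in[OF fvals_finite]) blast
  then show ?thesis by blast
qed

lemma seg_inj:
  assumes k: "k \<ge> 2" and e: "set (seg a b 1 d k) = set (seg a' b' 1 d' k)"
  shows "a = a' \<and> b = b' \<and> d = d'"
proof -
  have "[a,b] \<in> set (seg a' b' 1 d' k)" using e seg_hd[of k a b 1 d] k by auto
  then obtain i where i: "a = a' + int i" "b = b' + int i * d'" unfolding set_seg by auto
  have "[a',b'] \<in> set (seg a b 1 d k)" using e seg_hd[of k a' b' 1 d'] k by auto
  then obtain j where j: "a' = a + int j" unfolding set_seg by auto
  from i j have "i = 0" by simp
  with i have ab: "a = a'" "b = b'" by auto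
  have "[a + int 1 * 1, b + int 1 * d] \<in> set (seg a b 1 d k)" unfolding set_seg using k by force
  then have "[a + 1, b + d] \<in> set (seg a' b' 1 d' k)" using e by simp
  then obtain m where m: "a + 1 = a' + int m" "b + d = b' + int m * d'" unfolding set_seg by auto
  from m ab have "m = 1" by simp
  with m ab show ?thesis by simp
qed

lemma lower:
  assumes k: "length w = k" "2 \<le> k" "k \<le> n"
  shows "fG w s n 1 * (n + 2 * (n - k + 1)) \<le> fG w (\<lambda>q. s [hd q]) n 2"
proof -
  define Oc where "Oc = occ1 w s n"
  define G where "G = (\<lambda>q::int list. s [hd q])"
  define D where "D = ({0::int} \<times> ({1..int n} \<times> Oc)) \<union> ({1} \<times> ({1..int n - int k + 1} \<times> Oc))
     \<union> ({-1} \<times> ({int k..int n} \<times> Oc))"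
  define f where "f = (\<lambda>(d::int,b::int,a::int). set (seg a b 1 d k))"
  have k1: "length w \<ge> 1" using k by simp
  have fO: "finite Oc" unfolding Oc_def using occ1_finite[OF k1] .
  have mem: "set (seg a b 1 d k) \<in> lines_containing w G n 2" if dba: "(d,b,a) \<in> D" for d b a
  proof -
    have aO: "a \<in> Oc" using dba unfolding D_def by auto
    then have a1: "1 \<le> a" "a + int k - 1 \<le> int n" and okA: "okw w (map s (seg1 a k))"
      unfolding Oc_def occ1_def using seg1_grid'[OF k1] k by auto
    have db: "(d = 0 \<and> 1 \<le> b \<and> b \<le> int n) \<or> (d = 1 \<and> 1 \<le> b \<and> b \<le> int n - int k + 1)
       \<or> (d = -1 \<and> int k \<le> b \<and> b \<le> int n)" using dba unfolding D_def by auto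
    have gr: "set (seg a b 1 d k) \<subseteq> grid_pts n 2"
      unfolding seg_grid
    proof (intro allI impI)
      fix i assume "i < k"
      then have "int i \<le> int k - 1" by simp
      then show "1 \<le> a + int i * 1 \<and> a + int i * 1 \<le> int n \<and> 1 \<le> b + int i * d \<and> b + int i * d \<le> int n"
        using db a1 by auto
    qed
    have mp: "map G (seg a b 1 d k) = map s (seg1 a k)"
      unfolding G_def seg_def seg1_def by simp
    have pg: "[a,b] \<in> grid_pts n 2" using gr seg_hd[of k a b 1 d] k by auto
    have dd: "[1,d] \<in> dirs 2" using db by (intro dirs2I) auto
    show ?thesis unfolding lines_containing_def
      apply (rule CollectI, rule exI[of _ "[a,b]"], rule exI[of _ "[1,d]"])
      using pg dd gr okA unfolding line_seq2 k mp okw_def by simp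
  qed
  have img: "f ` D \<subseteq> lines_containing w G n 2" unfolding f_def using mem by auto
  have inj: "inj_on f D"
    by (rule inj_onI) (auto simp: f_def dest: seg_inj[OF k(2)])
  have fD: "finite D" unfolding D_def using fO by auto
  have cD: "card D = card Oc * (n + 2 * (n - k + 1))"
  proof -
    have c1: "card ({0::int} \<times> ({1..int n} \<times> Oc)) = n * card Oc"
      by (simp add: card_cartesian_product)
    have nn: "nat (int n - int k + 1) = n - k + 1" using k by auto
    have c2: "card ({1::int} \<times> ({1..int n - int k + 1} \<times> Oc)) = (n - k + 1) * card Oc"
      using k nn by (simp add: card_cartesian_product)
    have c3: "card ({-1::int} \<times> ({int k..int n} \<times> Oc)) = (n - k + 1) * card Oc"
      using k nn by (simp add: card_cartesian_product)
    have "card D = card ({0::int} \<times> ({1..int n} \<times> Oc)) + card ({1::int} \<times> ({1..int n - int k + 1} \<times> Oc))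
        + card ({-1::int} \<times> ({int k..int n} \<times> Oc))"
      unfolding D_def using fO
      by (subst card_Un_disjoint; auto)+
    then show ?thesis using c1 c2 c3 by (simp add: algebra_simps)
  qed
  have "card D = card (f ` D)" using card_image[OF inj] by simp
  also have "\<dots> \<le> card (lines_containing w G n 2)" by (rule card_mono[OF LC_finite img])
  finally have fin: "card D \<le> fG w G n 2" unfolding fG_def .
  have "fG w s n 1 = card Oc" using fG1[OF k1] Oc_def by simp
  then show ?thesis using fin cD unfolding G_def by (simp add: mult.commute)
qed

lemma Q_finite: assumes k1: "length w \<ge> 1" shows "finite (Q w G n c d)"
proof -
  have "Q w G n c d \<subseteq> {1..int n} \<times> {1..int n}"
  proof
    fix x assume x: "x \<in> Q w G n c d"
    obtain a b where ab: "x = (a,b)" by (cases x)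
    have "[a,b] \<in> grid_pts n 2" using x seg_hd[OF k1, of a b c d] unfolding ab Q_def by blast
    then show "x \<in> {1..int n} \<times> {1..int n}" unfolding ab by (simp add: grid2)
  qed
  then show ?thesis using finite_subset by blast
qed

lemma bound_H:
  assumes k1: "length w \<ge> 1"
  shows "card (Q w G n 1 0) \<le> n * fmax w n 1"
proof -
  define S where "S = (SIGMA b:{1..int n}. occ1 w (\<lambda>q. G [hd q, b]) n)"
  have sub: "Q w G n 1 0 \<subseteq> (\<lambda>(b,a). (a,b)) ` S"
  proof
    fix x assume x: "x \<in> Q w G n 1 0"
    obtain a b where ab: "x = (a,b)" by (cases x)
    have gr: "\<forall>i<length w. 1 \<le> a + int i \<and> a + int i \<le> int n \<and> 1 \<le> b \<and> b \<le> int n"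
      and ok: "okw w (map G (seg a b 1 0 (length w)))"
      using x unfolding ab Q_def seg_grid by auto
    have "0 < length w" using k1 by linarith
    then have b: "b \<in> {1..int n}" using gr by auto
    have "map (\<lambda>q. G [hd q, b]) (seg1 a (length w)) = map G (seg a b 1 0 (length w))"
      unfolding seg_def seg1_def by simp
    then have "a \<in> occ1 w (\<lambda>q. G [hd q, b]) n"
      unfolding occ1_def seg1_grid using gr ok by auto
    then show "x \<in> (\<lambda>(b,a). (a,b)) ` S" unfolding S_def ab using b by force
  qed
  have fS: "finite S" unfolding S_def using occ1_finite[OF k1] by auto
  have "card (Q w G n 1 0) \<le> card ((\<lambda>(b,a). (a,b)) ` S)"
    by (rule card_mono[OF _ sub]) (use fS in auto)
  also have "\<dots> \<le> card S" by (rule card_image_le[OF fS])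
  also have "\<dots> = (\<Sum>b\<in>{1..int n}. card (occ1 w (\<lambda>q. G [hd q, b]) n))"
    unfolding S_def by (rule card_SigmaI) (auto intro: occ1_finite[OF k1])
  also have "\<dots> \<le> (\<Sum>b\<in>{1..int n}. fmax w n 1)"
    by (rule sum_mono) (metis fG1[OF k1] fG_le_fmax)
  also have "\<dots> = n * fmax w n 1" by simp
  finally show ?thesis .
qed

lemma bound_V:
  assumes k1: "length w \<ge> 1"
  shows "card (Q w G n 0 1) \<le> card (Q w (\<lambda>q. G [q!1, hd q]) n 1 0)"
proof -
  have sub: "Q w G n 0 1 \<subseteq> (\<lambda>(b,a). (a,b)) ` Q w (\<lambda>q. G [q!1, hd q]) n 1 0"
  proof
    fix x assume x: "x \<in> Q w G n 0 1"
    obtain a b where ab: "x = (a,b)" by (cases x)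
    have "map (\<lambda>q. G [q!1, hd q]) (seg b a 1 0 (length w)) = map G (seg a b 0 1 (length w))"
      unfolding seg_def by simp
    then have "(b,a) \<in> Q w (\<lambda>q. G [q!1, hd q]) n 1 0"
      using x unfolding ab Q_def seg_grid by auto
    then show "x \<in> (\<lambda>(b,a). (a,b)) ` Q w (\<lambda>q. G [q!1, hd q]) n 1 0" unfolding ab by force
  qed
  have "card (Q w G n 0 1) \<le> card ((\<lambda>(b,a). (a,b)) ` Q w (\<lambda>q. G [q!1, hd q]) n 1 0)"
    by (rule card_mono[OF _ sub]) (use Q_finite[OF k1] in auto)
  also have "\<dots> \<le> card (Q w (\<lambda>q. G [q!1, hd q]) n 1 0)" by (rule card_image_le[OF Q_finite[OF k1]])
  finally show ?thesis .
qed

lemma bound_A: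
  assumes k1: "length w \<ge> 1"
  shows "card (Q w G n 1 (-1)) \<le> card (Q w (\<lambda>q. G [hd q, int n + 1 - q!1]) n 1 1)"
proof -
  define G' where "G' = (\<lambda>q. G [hd q, int n + 1 - q!1])"
  have sub: "Q w G n 1 (-1) \<subseteq> (\<lambda>(a,b). (a, int n + 1 - b)) ` Q w G' n 1 1"
  proof
    fix x assume x: "x \<in> Q w G n 1 (-1)"
    obtain a b where ab: "x = (a,b)" by (cases x)
    have "map G' (seg a (int n + 1 - b) 1 1 (length w)) = map G (seg a b 1 (-1) (length w))"
      unfolding seg_def G'_def by simp
    moreover have "set (seg a (int n + 1 - b) 1 1 (length w)) \<subseteq> grid_pts n 2"
      using x unfolding ab Q_def seg_grid by auto
    ultimately have "(a, int n + 1 - b) \<in> Q w G' n 1 1"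
      using x unfolding ab Q_def by auto
    then show "x \<in> (\<lambda>(a,b). (a, int n + 1 - b)) ` Q w G' n 1 1" unfolding ab by force
  qed
  have "card (Q w G n 1 (-1)) \<le> card ((\<lambda>(a,b). (a, int n + 1 - b)) ` Q w G' n 1 1)"
    by (rule card_mono[OF _ sub]) (use Q_finite[OF k1] in auto)
  also have "\<dots> \<le> card (Q w G' n 1 1)" by (rule card_image_le[OF Q_finite[OF k1]])
  finally show ?thesis unfolding G'_def .
qed

lemma bound_D:
  assumes k: "length w = k" "1 \<le> k" "k \<le> n"
  shows "card (Q w G n 1 1) \<le> (\<Sum>c\<in>{-(int n - int k)..int n - int k}. fmax w (nat (int n - \<bar>c\<bar>)) 1)"
proof -
  have k1: "length w \<ge> 1" using k by simp
  define H where "H = (\<lambda>c q. G [hd q + max 0 (-c), hd q + max 0 c])"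
  define S where "S = (SIGMA c:{-(int n - int k)..int n - int k}. occ1 w (H c) (nat (int n - \<bar>c\<bar>)))"
  have sub: "Q w G n 1 1 \<subseteq> (\<lambda>(c,t). (t + max 0 (-c), t + max 0 c)) ` S"
  proof
    fix x assume x: "x \<in> Q w G n 1 1"
    obtain a b where ab: "x = (a,b)" by (cases x)
    have gr: "\<forall>i<k. 1 \<le> a + int i \<and> a + int i \<le> int n \<and> 1 \<le> b + int i \<and> b + int i \<le> int n"
      and ok: "okw w (map G (seg a b 1 1 k))"
      using x unfolding ab Q_def seg_grid k by auto
    have "0 < k" "k - 1 < k" using k by auto
    then have b0: "1 \<le> a" "1 \<le> b" and b1: "a + int (k-1) \<le> int n" "b + int (k-1) \<le> int n"
      using gr by auto
    define c where "c = b - a"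
    define t where "t = min a b"
    have eqA: "t + max 0 (-c) = a" and eqB: "t + max 0 c = b"
      unfolding c_def t_def by auto
    have cr: "c \<in> {-(int n - int k)..int n - int k}"
      using b0 b1 k unfolding c_def by (auto simp: of_nat_diff)
    have tb: "1 \<le> t \<and> t + int k - 1 \<le> int (nat (int n - \<bar>c\<bar>))"
      using b0 b1 k unfolding c_def t_def by (auto simp: of_nat_diff)
    have "map (H c) (seg1 t k) = map G (seg (t + max 0 (-c)) (t + max 0 c) 1 1 k)"
      unfolding seg_def seg1_def H_def by (simp add: algebra_simps)
    then have "map (H c) (seg1 t k) = map G (seg a b 1 1 k)" unfolding eqA eqB .
    then have "t \<in> occ1 w (H c) (nat (int n - \<bar>c\<bar>))"
      unfolding occ1_def k seg1_grid'[OF k(2)] using tb ok by auto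
    then have "(c,t) \<in> S" unfolding S_def using cr by auto
    then show "x \<in> (\<lambda>(c,t). (t + max 0 (-c), t + max 0 c)) ` S"
      unfolding ab using eqA eqB by force
  qed
  have fS: "finite S" unfolding S_def using occ1_finite[OF k1] by auto
  have "card (Q w G n 1 1) \<le> card ((\<lambda>(c,t). (t + max 0 (-c), t + max 0 c)) ` S)"
    by (rule card_mono[OF _ sub]) (use fS in auto)
  also have "\<dots> \<le> card S" by (rule card_image_le[OF fS])
  also have "\<dots> = (\<Sum>c\<in>{-(int n - int k)..int n - int k}. card (occ1 w (H c) (nat (int n - \<bar>c\<bar>))))"
    unfolding S_def by (rule card_SigmaI) (auto intro: occ1_finite[OF k1])
  also have "\<dots> \<le> (\<Sum>c\<in>{-(int n - int k)..int n - int k}. fmax w (nat (int n - \<bar>c\<bar>)) 1)"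
    by (rule sum_mono) (metis fG1[OF k1] fG_le_fmax)
  finally show ?thesis .
qed

lemma LC2_sub:
  fixes G :: "int list \<Rightarrow> 'a" and n :: nat and w :: "'a list"
  assumes k1: "length w \<ge> 1"
  defines "img \<equiv> (\<lambda>c d. (\<lambda>(a,b). set (seg a b c d (length w))) ` Q w G n c d)"
  shows "lines_containing w G n 2 \<subseteq> img 1 0 \<union> img 0 1 \<union> img 1 1 \<union> img 1 (-1)"
proof
  fix L assume "L \<in> lines_containing w G n 2"
  then obtain p v where p: "p \<in> grid_pts n 2" and v: "v \<in> dirs 2"
    and sub: "set (line_seq p v (length w)) \<subseteq> grid_pts n 2"
    and L: "L = set (line_seq p v (length w))"
    and ok: "okw w (map G (line_seq p v (length w)))"
    unfolding lines_containing_def okw_def by blast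
  obtain a b where pab: "p = [a,b]" using grid2E p by blast
  obtain c d where vcd: "v = [c,d]" and cd: "c \<in> {-1,0,1}" "d \<in> {-1,0,1}" "c \<noteq> 0 \<or> d \<noteq> 0"
    using dirs2E v by blast
  have e: "line_seq p v (length w) = seg a b c d (length w)" unfolding pab vcd line_seq2 ..
  have AQ: "(a,b) \<in> Q w G n c d" unfolding Q_def using sub ok unfolding e by simp
  have A: "L \<in> img c d" unfolding img_def L e by (rule image_eqI[OF _ AQ]) simp
  define a' where "a' = a + int (length w - 1) * c"
  define b' where "b' = b + int (length w - 1) * d"
  have e2: "seg a b c d (length w) = rev (seg a' b' (-c) (-d) (length w))"
    unfolding a'_def b'_def by (rule seg_rev)
  have se: "set (seg a' b' (-c) (-d) (length w)) = set (seg a b c d (length w))" using e2 by simp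
  have ok2: "okw w (map G (seg a' b' (-c) (-d) (length w)))"
    using ok unfolding e e2 rev_map[symmetric] okw_rev .
  have BQ: "(a',b') \<in> Q w G n (-c) (-d)" unfolding Q_def using sub ok2 se unfolding e by simp
  have B: "L \<in> img (-c) (-d)" unfolding img_def L e e2 by (rule image_eqI[OF _ BQ]) simp
  define U where "U = img 1 0 \<union> img 0 1 \<union> img 1 1 \<union> img 1 (-1)"
  define S where "S = {(1::int,0::int),(0,1),(1,1),(1,-1)}"
  have cs: "(c,d) \<in> S \<or> (-c,-d) \<in> S" using cd unfolding S_def by auto
  have SU: "img x y \<subseteq> U" if "(x,y) \<in> S" for x y
  proof -
    from that have "(x = 1 \<and> y = 0) \<or> (x = 0 \<and> y = 1) \<or> (x = 1 \<and> y = 1) \<or> (x = 1 \<and> y = -1)"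
      unfolding S_def by blast
    then show ?thesis unfolding U_def by (elim disjE conjE; hypsubst; blast)
  qed
  from cs have "L \<in> U"
  proof
    assume "(c,d) \<in> S"
    then have "img c d \<subseteq> U" by (rule SU)
    then show "L \<in> U" using A by (rule subsetD)
  next
    assume "(-c,-d) \<in> S"
    then have "img (-c) (-d) \<subseteq> U" by (rule SU)
    then show "L \<in> U" using B by (rule subsetD)
  qed
  then show "L \<in> img 1 0 \<union> img 0 1 \<union> img 1 1 \<union> img 1 (-1)" unfolding U_def .
qed

lemma fG2_le:
  assumes k1: "length w \<ge> 1"
  shows "fG w G n 2 \<le> card (Q w G n 1 0) + card (Q w G n 0 1) + card (Q w G n 1 1) + card (Q w G n 1 (-1))"
proof -
  define img where "img = (\<lambda>c d. (\<lambda>(a,b). set (seg a b (c::int) (d::int) (length w))) ` Q w G n c d)"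
  have le: "card (img c d) \<le> card (Q w G n c d)" for c d
    unfolding img_def by (rule card_image_le[OF Q_finite[OF k1]])
  have fi: "finite (img c d)" for c d unfolding img_def using Q_finite[OF k1] by auto
  have "fG w G n 2 \<le> card (img 1 0 \<union> img 0 1 \<union> img 1 1 \<union> img 1 (-1))"
    unfolding fG_def
  proof (rule card_mono)
    show "finite (img 1 0 \<union> img 0 1 \<union> img 1 1 \<union> img 1 (-1))" using fi by blast
    show "lines_containing w G n 2 \<subseteq> img 1 0 \<union> img 0 1 \<union> img 1 1 \<union> img 1 (-1)"
      unfolding img_def by (rule LC2_sub[OF k1])
  qed
  also have "\<dots> \<le> card (img 1 0) + card (img 0 1) + card (img 1 1) + card (img 1 (-1))"
  proof -
    have "card (img 1 0 \<union> img 0 1 \<union> img 1 1 \<union> img 1 (-1)) \<le> card (img 1 0 \<union> img 0 1 \<union> img 1 1) + card (img 1 (-1))"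
      by (rule card_Un_le)
    moreover have "card (img 1 0 \<union> img 0 1 \<union> img 1 1) \<le> card (img 1 0 \<union> img 0 1) + card (img 1 1)"
      by (rule card_Un_le)
    moreover have "card (img 1 0 \<union> img 0 1) \<le> card (img 1 0) + card (img 0 1)"
      by (rule card_Un_le)
    ultimately show ?thesis by linarith
  qed
  also have "\<dots> \<le> card (Q w G n 1 0) + card (Q w G n 0 1) + card (Q w G n 1 1) + card (Q w G n 1 (-1))"
    by (intro add_mono le)
  finally show ?thesis .
qed

lemma sum_reidx:
  fixes F :: "nat \<Rightarrow> nat"
  assumes "k \<le> n" "1 \<le> k"
  shows "(\<Sum>c\<in>{-(int n - int k)..int n - int k}. F (nat (int n - \<bar>c\<bar>))) \<le> 2 * (\<Sum>i=k..n. F i)"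
proof -
  have split: "{-(int n - int k)..int n - int k} = {-(int n - int k)..0} \<union> {1..int n - int k}"
    using assms by auto
  have s1: "(\<Sum>c\<in>{-(int n - int k)..0}. F (nat (int n - \<bar>c\<bar>))) = (\<Sum>i=k..n. F i)"
    by (rule sum.reindex_bij_witness[of _ "\<lambda>i. int i - int n" "\<lambda>c. nat (int n + c)"]) (use assms in auto)
  have s2: "(\<Sum>c\<in>{1..int n - int k}. F (nat (int n - \<bar>c\<bar>))) = (\<Sum>i\<in>{k..<n}. F i)"
    by (rule sum.reindex_bij_witness[of _ "\<lambda>i. int n - int i" "\<lambda>c. nat (int n - c)"]) (use assms in auto)
  have s3: "(\<Sum>i\<in>{k..<n}. F i) \<le> (\<Sum>i=k..n. F i)"
    by (rule sum_mono2) auto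
  have "(\<Sum>c\<in>{-(int n - int k)..int n - int k}. F (nat (int n - \<bar>c\<bar>))) =
     (\<Sum>c\<in>{-(int n - int k)..0}. F (nat (int n - \<bar>c\<bar>))) + (\<Sum>c\<in>{1..int n - int k}. F (nat (int n - \<bar>c\<bar>)))"
    unfolding split by (rule sum.union_disjoint) auto
  then show ?thesis using s1 s2 s3 by simp
qed

theorem theorem23:
  fixes w :: "'a list" and n k :: nat
  assumes "2 \<le> k" and "k \<le> n" and "length w = k"
  shows "int (fmax w n 1) * (3 * int n - 4 * int k) \<le> int (fmax w n 2) \<and>
         int (fmax w n 2) \<le> int (fmax w n 1) * (2 * int n) + 4 * (\<Sum>i=k..n. int (fmax w i 1))"
proof
  have k1: "length w \<ge> 1" using assms by simp
  define m where "m = fmax w n 1"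
  obtain s where ms: "fmax w n 1 = fG w s n 1" using fmax_attained by blast
  have "m * (n + 2 * (n - k + 1)) \<le> fG w (\<lambda>q. s [hd q]) n 2"
    unfolding m_def ms using lower[OF assms(3) assms(1) assms(2)] .
  also have "\<dots> \<le> fmax w n 2" by (rule fG_le_fmax)
  finally have L: "m * (n + 2 * (n - k + 1)) \<le> fmax w n 2" .
  have d: "int (n - k) = int n - int k" using assms(2) by simp
  have e0: "int (m * (n + 2 * (n - k + 1))) = int m * (int n + 2 * (int (n - k) + 1))"
    by (simp only: of_nat_mult of_nat_add of_nat_1 of_nat_numeral)
  then have e: "int (m * (n + 2 * (n - k + 1))) = int m * (int n + 2 * (int n - int k + 1))"
    unfolding d .
  have "int m * (3 * int n - 4 * int k) \<le> int m * (int n + 2 * (int n - int k + 1))"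
    by (rule mult_left_mono) auto
  also have "\<dots> \<le> int (fmax w n 2)" using L e by (metis of_nat_le_iff)
  finally show "int (fmax w n 1) * (3 * int n - 4 * int k) \<le> int (fmax w n 2)" unfolding m_def .
next
  have k1: "length w \<ge> 1" using assms by simp
  define m where "m = fmax w n 1"
  define S where "S = (\<Sum>i=k..n. fmax w i 1)"
  define T where "T = (\<Sum>c\<in>{-(int n - int k)..int n - int k}. fmax w (nat (int n - \<bar>c\<bar>)) 1)"
  have T: "T \<le> 2 * S" unfolding T_def S_def
    by (rule sum_reidx[of k n "\<lambda>i. fmax w i 1"]) (use assms in auto)
  obtain G where mG: "fmax w n 2 = fG w G n 2" using fmax_attained by blast
  have "fG w G n 2 \<le> card (Q w G n 1 0) + card (Q w G n 0 1) + card (Q w G n 1 1) + card (Q w G n 1 (-1))"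
    by (rule fG2_le[OF k1])
  moreover have "card (Q w G n 1 0) \<le> n * m" unfolding m_def by (rule bound_H[OF k1])
  moreover have "card (Q w G n 0 1) \<le> n * m" unfolding m_def
    using bound_V[OF k1, of G n] bound_H[OF k1, of "\<lambda>q. G [q!1, hd q]" n] by linarith
  moreover have "card (Q w G n 1 1) \<le> T" unfolding T_def
    by (rule bound_D) (use assms in auto)
  moreover have "card (Q w G n 1 (-1)) \<le> T" unfolding T_def
    using bound_A[OF k1, of G n] bound_D[OF assms(3) _ assms(2), of "\<lambda>q. G [hd q, int n + 1 - q!1]"] assms(1)
    by linarith
  ultimately have "fmax w n 2 \<le> 2 * n * m + 4 * S" using T mG by linarith
  then have "int (fmax w n 2) \<le> int (2 * n * m + 4 * S)" by (metis of_nat_le_iff)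
  also have "\<dots> = int m * (2 * int n) + 4 * (\<Sum>i=k..n. int (fmax w i 1))"
    unfolding S_def by (simp add: of_nat_sum)
  finally show "int (fmax w n 2) \<le> int (fmax w n 1) * (2 * int n) + 4 * (\<Sum>i=k..n. int (fmax w i 1))"
    unfolding m_def .
qed

end
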